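(* Let $f\in C(\mathbb{R}^4)$, $f=f(r,\tau,u,t)$, be bounded, $\kappa$-Lipschitz, $1$-periodic in $r$ and $\tau$, and non-increasing in $u$. Let $\bar f(u_0,t_0)$ be the constant with $\lim_{\varepsilon\to0}u^\varepsilon(t;c,u_0,t_0)=c+\bar f(u_0,t_0)t$, where $u^\varepsilon(\cdot;c,u_0,t_0)$ solves $\dot u^\varepsilon=f(u^\varepsilon/\varepsilon,t/\varepsilon,u_0,t_0)$, $u^\varepsilon(0)=c$. Let $\overline u(t;c)$ be the solution of $\dot{\overline u}=\bar f(\overline u,t)$, $\overline u(0)=c$, and $u^\varepsilon(t;c)$ the solution of $\dot u^\varepsilon=f(u^\varepsilon/\varepsilon,t/\varepsilon,u^\varepsilon,t)$, $u^\varepsilon(0)=c$. Then for all $t>0$ and $c\in\mathbb{R}$, $|u^\varepsilon(t;c)-\overline u(t;c)|\le 2\|f\|_\infty t$. *)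

theory Defs
  imports "HOL-Analysis.Analysis"
begin

definition solves_ivp :: "(real \<Rightarrow> real) \<Rightarrow> (real \<Rightarrow> real \<Rightarrow> real) \<Rightarrow> real \<Rightarrow> bool" where
  "solves_ivp y F c \<longleftrightarrow> y 0 = c \<and>
     (\<forall>s\<ge>0. (y has_real_derivative F s (y s)) (at s within {0..}))"

definition sup_norm4 :: "(real \<Rightarrow> real \<Rightarrow> real \<Rightarrow> real \<Rightarrow> real) \<Rightarrow> real" where
  "sup_norm4 f = (SUP x\<in>(UNIV :: (real \<times> real \<times> real \<times> real) set).
                    \<bar>case x of (r, \<tau>, u, t) \<Rightarrow> f r \<tau> u t\<bar>)"

end

theory Submission
  imports Defs
begin

lemma int_deriv:
  fixes h :: "real \<Rightarrow> real"
  assumes h: "continuous_on UNIV h" and s: "s \<ge> 0"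
  shows "((\<lambda>x. integral {0..x} h) has_real_derivative h s) (at s within {0..})"
proof -
  have "((\<lambda>x. integral {0..x} h) has_vector_derivative h s) (at s within {0..s+1})"
    by (rule integral_has_vector_derivative) (use h s continuous_on_subset in auto)
  moreover have "at s within {0..s+1} = at s within {0..}"
    by (rule at_within_nhd[where S="{-1<..<s+1}"]) (use s in auto)
  ultimately show ?thesis
    by (simp add: has_real_derivative_iff_has_vector_derivative)
qed

lemma int_cont:
  fixes h :: "real \<Rightarrow> real"
  assumes h: "continuous_on UNIV h"
  shows "continuous_on UNIV (\<lambda>x. integral {0..max 0 x} h)"
proof -
  have "continuous_on {0..} (\<lambda>x. integral {0..x} h)"
    unfolding continuous_on_eq_continuous_within
    using int_deriv[OF h] DERIV_continuous by (auto simp: atLeast_def) blast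
  then show ?thesis
    by (rule continuous_on_compose2[where f="\<lambda>x. max 0 x"]) (auto intro: continuous_intros)
qed

lemma int_bound:
  fixes h :: "real \<Rightarrow> real"
  assumes h: "continuous_on UNIV h" and s: "s \<ge> 0" and b: "\<And>r. 0 \<le> r \<Longrightarrow> r \<le> s \<Longrightarrow> \<bar>h r\<bar> \<le> g r"
    and g: "continuous_on UNIV g"
  shows "\<bar>integral {0..s} h\<bar> \<le> integral {0..s} g"
proof -
  have "norm (integral {0..s} h) \<le> integral {0..s} g"
    apply (rule integral_norm_bound_integral)
    using h g b by (auto intro!: integrable_continuous_interval continuous_on_subset[of UNIV])
  then show ?thesis by simp
qed

lemma exp_int:
  fixes L D s :: real
  assumes L: "L > 0" and s: "s \<ge> 0"
  shows "integral {0..s} (\<lambda>r. L * D * exp (2*L*r)) = D/2 * (exp (2*L* s) - 1)"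
proof -
  have "((\<lambda>r. L * D * exp (2*L*r)) has_integral ((\<lambda>r. D/2 * exp (2*L*r)) s - (\<lambda>r. D/2 * exp (2*L*r)) 0)) {0..s}"
    apply (rule fundamental_theorem_of_calculus[OF s])
    apply (simp add: has_real_derivative_iff_has_vector_derivative[symmetric])
    apply (rule derivative_eq_intros refl | simp)+
    done
  then have "integral {0..s} (\<lambda>r. L * D * exp (2*L*r)) = D/2 * exp (2*L * s) - D/2 * exp (2*L*0)"
    by (rule integral_unique)
  then show ?thesis by (simp add: algebra_simps)
qed

lemma exists_sol:
  fixes g :: "real \<Rightarrow> real \<Rightarrow> real"
  assumes gc: "continuous_on UNIV (\<lambda>p. g (fst p) (snd p))"
   and gb: "\<And>r y. \<bar>g r y\<bar> \<le> M"
   and gl: "\<And>r y1 y2. \<bar>g r y1 - g r y2\<bar> \<le> L * \<bar>y1 - y2\<bar>" and L: "L > 0"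
  shows "\<exists>y. solves_ivp y g c"
proof -
  have M0: "M \<ge> 0" using gb[of 0 0] by linarith
  have gcomp: "continuous_on UNIV (\<lambda>r. g r (y r))" if "continuous_on UNIV y" for y
  proof -
    have "continuous_on UNIV (\<lambda>r. (\<lambda>p. g (fst p) (snd p)) (r, y r))"
      by (rule continuous_on_compose2[OF gc]) (auto intro!: continuous_intros that)
    then show ?thesis by simp
  qed
  define H where "H w r = g r (c + exp(2*L*r) * w r)" for w :: "real \<Rightarrow> real" and r
  have Hc: "continuous_on UNIV (H w)" if "continuous_on UNIV w" for w
    unfolding H_def by (rule gcomp) (auto intro!: continuous_intros that)
  define P where "P w s = exp(-2*L* s) * integral {0..max 0 s} (H w)" for w :: "real \<Rightarrow> real" and s
  have Pin: "P (apply_bcontfun w) \<in> bcontfun" for w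
  proof (rule bcontfun_normI)
    show "continuous_on UNIV (P (apply_bcontfun w))"
      unfolding P_def by (auto intro!: continuous_intros int_cont Hc)
    fix s
    show "norm (P (apply_bcontfun w) s) \<le> M / (2*L)"
    proof (cases "s \<ge> 0")
      case False
      then show ?thesis using M0 L by (simp add: P_def max_def)
    next
      case True
      have "\<bar>integral {0..s} (H w)\<bar> \<le> integral {0..s} (\<lambda>_. M)"
        by (rule int_bound[OF Hc]) (use True gb in \<open>auto simp: H_def\<close>)
      also have "\<dots> = s * M" using True by simp
      finally have i: "\<bar>integral {0..s} (H w)\<bar> \<le> s * M" .
      have e: "2*L* s \<le> exp (2*L* s)" using exp_ge_add_one_self[of "2*L* s"] by linarith
      have "norm (P (apply_bcontfun w) s) = exp(-2*L* s) * \<bar>integral {0..s} (H w)\<bar>"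
        using True by (simp add: P_def abs_mult)
      also have "\<dots> \<le> exp(-2*L* s) * (s * M)" using i by (simp add: mult_left_mono)
      also have "\<dots> \<le> M / (2*L)"
      proof -
        have "2*L*(s*M) \<le> exp (2*L* s) * M" using mult_right_mono[OF e M0] by simp
        hence "s * M \<le> exp (2*L* s) * (M / (2*L))" using L by (simp add: field_simps)
        hence "exp(-2*L* s) * (s * M) \<le> exp(-2*L* s) * (exp (2*L* s) * (M / (2*L)))"
          by (intro mult_left_mono) auto
        also have "\<dots> = M / (2*L)" by (simp add: exp_minus_inverse mult.assoc[symmetric] exp_add[symmetric])
        finally show ?thesis .
      qed
      finally show ?thesis .
    qed
  qed
  define \<Phi> where "\<Phi> w = Bcontfun (P (apply_bcontfun w))" for w :: "real \<Rightarrow>\<^sub>C real"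
  have \<Phi>a: "apply_bcontfun (\<Phi> w) = P (apply_bcontfun w)" for w
    unfolding \<Phi>_def using Pin Bcontfun_inverse by blast
  have contr: "dist (\<Phi> w1) (\<Phi> w2) \<le> 1/2 * dist w1 w2" for w1 w2
  proof (rule dist_bound)
    fix s
    define D where "D = dist w1 w2"
    show "dist (apply_bcontfun (\<Phi> w1) s) (apply_bcontfun (\<Phi> w2) s) \<le> 1/2 * dist w1 w2"
    proof (cases "s \<ge> 0")
      case False
      then show ?thesis by (simp add: \<Phi>a P_def max_def)
    next
      case True
      have int: "H (apply_bcontfun w) integrable_on {0..s}" for w
        by (rule integrable_continuous_interval) (auto intro: continuous_on_subset Hc)
      have "\<bar>integral {0..s} (\<lambda>r. H w1 r - H w2 r)\<bar> \<le> integral {0..s} (\<lambda>r. L * D * exp (2*L*r))"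
      proof (rule int_bound)
        show "continuous_on UNIV (\<lambda>r. H w1 r - H w2 r)" by (auto intro!: continuous_intros Hc)
        show "continuous_on UNIV (\<lambda>r. L * D * exp (2*L*r))" by (auto intro!: continuous_intros)
        show "0 \<le> s" by (rule True)
        fix r
        have "\<bar>H w1 r - H w2 r\<bar> \<le> L * \<bar>exp(2*L*r) * w1 r - exp(2*L*r) * w2 r\<bar>"
          unfolding H_def using gl by (metis add_diff_cancel_left)
        also have "\<dots> = L * exp(2*L*r) * \<bar>w1 r - w2 r\<bar>"
          by (simp add: abs_mult right_diff_distrib[symmetric])
        also have "\<dots> \<le> L * exp(2*L*r) * D"
          using dist_bounded[of w1 r w2] L unfolding D_def dist_real_def
          by (intro mult_left_mono) auto
        finally show "\<bar>H w1 r - H w2 r\<bar> \<le> L * D * exp (2*L*r)" by (simp add: algebra_simps)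
      qed
      also have "\<dots> = D/2 * (exp (2*L* s) - 1)" by (rule exp_int[OF L True])
      finally have i: "\<bar>integral {0..s} (H w1) - integral {0..s} (H w2)\<bar> \<le> D/2 * (exp (2*L* s) - 1)"
        using integral_diff[OF int int, of w1 w2] by simp
      have "dist (apply_bcontfun (\<Phi> w1) s) (apply_bcontfun (\<Phi> w2) s)
          = exp(-2*L* s) * \<bar>integral {0..s} (H w1) - integral {0..s} (H w2)\<bar>"
        using True by (simp add: \<Phi>a P_def dist_real_def abs_mult right_diff_distrib[symmetric])
      also have "\<dots> \<le> exp(-2*L* s) * (D/2 * (exp (2*L* s) - 1))" using i by (simp add: mult_left_mono)
      also have "\<dots> = D/2 - D/2 * exp(-2*L* s)"
        by (simp add: algebra_simps exp_add[symmetric])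
      also have "\<dots> \<le> D/2" using zero_le_dist[of w1 w2] unfolding D_def by simp
      finally show ?thesis unfolding D_def by simp
    qed
  qed
  obtain w where w: "\<Phi> w = w" using banach_fix_type[of "1/2" \<Phi>] contr by auto
  define y where "y s = c + exp(2*L* s) * w s" for s
  have yc: "continuous_on UNIV y" unfolding y_def by (auto intro!: continuous_intros)
  have Hy: "H w = (\<lambda>r. g r (y r))" unfolding H_def y_def by auto
  have yeq: "y s = c + integral {0..s} (\<lambda>r. g r (y r))" if "s \<ge> 0" for s
  proof -
    have "w s = P w s" using w \<Phi>a by metis
    then have "exp(2*L* s) * w s = integral {0..s} (\<lambda>r. g r (y r))"
      using that by (simp add: P_def Hy mult.assoc[symmetric] exp_add[symmetric])
    then show ?thesis unfolding y_def by simp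
  qed
  have "solves_ivp y g c"
    unfolding solves_ivp_def
  proof (intro conjI allI impI)
    show "y 0 = c" using yeq[of 0] by simp
    fix s :: real assume s: "s \<ge> 0"
    have "((\<lambda>x. c + integral {0..x} (\<lambda>r. g r (y r))) has_real_derivative g s (y s)) (at s within {0..})"
      using int_deriv[OF gcomp[OF yc] s] by (auto intro!: derivative_eq_intros)
    then show "(y has_real_derivative g s (y s)) (at s within {0..})"
      by (rule has_field_derivative_transform_within[where d=1]) (use s yeq in auto)
  qed
  then show ?thesis by blast
qed

lemma ivp_bound:
  assumes y: "solves_ivp y G c0" and b: "\<And>s v. \<bar>G s v\<bar> \<le> M" and s: "s \<ge> 0"
  shows "\<bar>y s - c0\<bar> \<le> M * s"
proof -
  have "norm (y s - y 0) \<le> M * norm (s - 0)"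
  proof (rule field_differentiable_bound[where S="{0..s}"])
    fix z assume z: "z \<in> {0..s}"
    then show "(y has_field_derivative G z (y z)) (at z within {0..s})"
      using y unfolding solves_ivp_def by (auto intro: DERIV_subset)
    show "norm (G z (y z)) \<le> M" using b by simp
  qed (use s in auto)
  then show ?thesis using y s by (simp add: solves_ivp_def)
qed

theorem lemma2p6:
  fixes f :: "real \<Rightarrow> real \<Rightarrow> real \<Rightarrow> real \<Rightarrow> real"
    and fbar :: "real \<Rightarrow> real \<Rightarrow> real"
    and \<kappa> \<epsilon> c t :: real
    and u ubar :: "real \<Rightarrow> real"
  assumes cont: "continuous_on UNIV (\<lambda>(r, \<tau>, v, s). f r \<tau> v s)"
    and bdd: "bounded (range (\<lambda>(r, \<tau>, v, s). f r \<tau> v s))"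
    and lip: "\<kappa>-lipschitz_on UNIV (\<lambda>(r, \<tau>, v, s). f r \<tau> v s)"
    and per_r: "\<And>r \<tau> v s. f (r + 1) \<tau> v s = f r \<tau> v s"
    and per_tau: "\<And>r \<tau> v s. f r (\<tau> + 1) v s = f r \<tau> v s"
    and mono_u: "\<And>r \<tau> v w s. v \<le> w \<Longrightarrow> f r \<tau> w s \<le> f r \<tau> v s"
    and fbar_def: "\<And>u0 t0 c0 s U. s \<ge> 0 \<Longrightarrow> (\<And>e. e > 0 \<Longrightarrow>
                solves_ivp (U e) (\<lambda>s y. f (y / e) (s / e) u0 t0) c0) \<Longrightarrow>
              ((\<lambda>e. U e s) \<longlongrightarrow> c0 + fbar u0 t0 * s) (at_right 0)"
    and ubar: "solves_ivp ubar (\<lambda>s y. fbar y s) c"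
    and eps: "\<epsilon> > 0"
    and u: "solves_ivp u (\<lambda>s y. f (y / \<epsilon>) (s / \<epsilon>) y s) c"
    and t: "t > 0"
  shows "\<bar>u t - ubar t\<bar> \<le> 2 * sup_norm4 f * t"
proof -
  define M where "M = sup_norm4 f"
  define F where "F = (\<lambda>(r, \<tau>, v, s). f r \<tau> v s)"
  have fb: "\<bar>f r \<tau> v s\<bar> \<le> M" for r \<tau> v s
  proof -
    obtain B where B: "\<And>x. norm (F x) \<le> B" using bdd unfolding F_def bounded_iff by auto
    have "bdd_above ((\<lambda>x. \<bar>case x of (r, \<tau>, u, t) \<Rightarrow> f r \<tau> u t\<bar>) ` UNIV)"
      by (rule bdd_aboveI[where M=B]) (use B in \<open>auto simp: F_def split: prod.splits\<close>)
    from cSUP_upper[OF _ this, of "(r, \<tau>, v, s)"] show ?thesis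
      by (simp add: M_def sup_norm4_def)
  qed
  have fbarb: "\<bar>fbar u0 t0\<bar> \<le> M" for u0 t0
  proof -
    define G where "G e s y = f (y / e) (s / e) u0 t0" for e s y
    have ex: "\<exists>y. solves_ivp y (G e) 0" if e: "e > 0" for e
    proof (rule exists_sol)
      show "continuous_on UNIV (\<lambda>p. G e (fst p) (snd p))"
      proof -
        have "continuous_on UNIV ((\<lambda>(r, \<tau>, v, s). f r \<tau> v s) \<circ> (\<lambda>p. (snd p / e, fst p / e, u0, t0)))"
          by (rule continuous_on_compose[OF _ continuous_on_subset[OF cont]]) (use e in \<open>auto intro!: continuous_intros\<close>)
        then show ?thesis by (simp add: G_def o_def)
      qed
      show "\<bar>G e r y\<bar> \<le> M" for r y using fb by (simp add: G_def)
      show "0 < \<bar>\<kappa>\<bar> / e + 1" using e by (simp add: add_nonneg_pos)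
      fix r y1 y2 :: real
      have "dist (F (y1 / e, r / e, u0, t0)) (F (y2 / e, r / e, u0, t0)) \<le> \<kappa> * dist (y1 / e, r / e, u0, t0) (y2 / e, r / e, u0, t0)"
        using lip unfolding F_def by (rule lipschitz_onD) auto
      also have "dist (y1 / e, r / e, u0, t0) (y2 / e, r / e, u0, t0) = \<bar>y1 - y2\<bar> / e"
        using e by (simp add: dist_Pair_Pair dist_real_def diff_divide_distrib[symmetric])
      finally have "\<bar>G e r y1 - G e r y2\<bar> \<le> \<kappa> * (\<bar>y1 - y2\<bar> / e)"
        by (simp add: F_def G_def dist_real_def)
      also have "\<dots> \<le> (\<bar>\<kappa>\<bar> / e + 1) * \<bar>y1 - y2\<bar>"
        using e mult_right_mono[OF abs_ge_self[of \<kappa>] abs_ge_zero[of "y1 - y2"]] mult_nonneg_nonneg[of e "\<bar>y1 - y2\<bar>"] by (simp add: field_simps add_increasing)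
      finally show "\<bar>G e r y1 - G e r y2\<bar> \<le> (\<bar>\<kappa>\<bar> / e + 1) * \<bar>y1 - y2\<bar>" .
    qed
    define U where "U e = (SOME y. solves_ivp y (G e) 0)" for e
    have U: "solves_ivp (U e) (G e) 0" if "e > 0" for e
      unfolding U_def using someI_ex[OF ex[OF that]] .
    have lim: "((\<lambda>e. U e 1) \<longlongrightarrow> 0 + fbar u0 t0 * 1) (at_right 0)"
      by (rule fbar_def) (use U in \<open>auto simp: G_def[abs_def]\<close>)
    have ev: "eventually (\<lambda>e. \<bar>U e 1\<bar> \<le> M) (at_right (0::real))"
    proof -
      have "eventually (\<lambda>e. e > (0::real)) (at_right 0)" by (simp add: eventually_at_filter)
      then show ?thesis
      proof (rule eventually_mono)
        fix e :: real assume "e > 0"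
        from ivp_bound[where s=1 and M=M, OF U[OF this]] fb show "\<bar>U e 1\<bar> \<le> M" by (simp add: G_def)
      qed
    qed
    have "((\<lambda>e. \<bar>U e 1\<bar>) \<longlongrightarrow> \<bar>fbar u0 t0\<bar>) (at_right 0)"
      using tendsto_rabs[OF lim] by simp
    from tendsto_upperbound[OF this ev] show ?thesis by simp
  qed
  have b1: "\<bar>u t - c\<bar> \<le> M * t" by (rule ivp_bound[OF u _]) (use fb t in auto)
  have b2: "\<bar>ubar t - c\<bar> \<le> M * t" by (rule ivp_bound[OF ubar _]) (use fbarb t in auto)
  from b1 b2 show ?thesis unfolding M_def by linarith
qed

end
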